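(* Let $n\geq k\geq 4$ with $k\equiv 0\pmod 4$, and let $c\geq1$. Then there exists a diagonal $\mathrm{MS}^0_\Gamma(n,n;k,k;c)$ for every abelian group $\Gamma\in\mathcal G$ of order $nkc$.
   Context: Let $(\Gamma,+)$ be an abelian group. A partially filled array is an array in which some cells may be empty. A zero-sum magic partially filled array set $\mathrm{MS}^0_\Gamma(n,n;k,k;c)$ is a set of $c$ partially filled $n\times n$ arrays with entries in $\Gamma$ such that every element of $\Gamma$ appears exactly once in exactly one of the arrays, every array has exactly $k$ filled cells in each row and each column, and in every array the entries of each row and each column sum to $0_\Gamma$. For an $n\times n$ partially filled array, cell $(i,j)$ belongs to the diagonal $D_r$ if $j-i\equiv r\pmod n$; the array is $k$-diagonal if its nonempty cells are exactly those of $k$ consecutive diagonals (indices mod $n$); the set is diagonal if every member is $k$-diagonal. $\mathcal G$ is the set of all finite abelian groups that either have odd order or contain more than one element of order $2$. *)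

theory Defs
  imports Main
begin

text \<open>A family of c partially filled n x n arrays over an abelian group 'a is
  modelled as A :: nat => nat => nat => 'a option, where A t i j is the content
  of cell (i,j) (0-based, i,j < n) of array t (t < c); None = empty cell.\<close>

definition entry :: "'a::zero option \<Rightarrow> 'a" where
  "entry x = (case x of None \<Rightarrow> 0 | Some y \<Rightarrow> y)"

text \<open>Cell (i,j) lies on diagonal D_r iff j - i = r (mod n).\<close>
definition k_diagonal :: "nat \<Rightarrow> nat \<Rightarrow> (nat \<Rightarrow> nat \<Rightarrow> 'a option) \<Rightarrow> bool" where
  "k_diagonal n k B \<longleftrightarrow> (\<exists>s<n. \<forall>i<n. \<forall>j<n.
      (B i j \<noteq> None \<longleftrightarrow> (int j - int i - int s) mod int n < int k))"

definition zero_sum_magic_set ::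
  "nat \<Rightarrow> nat \<Rightarrow> nat \<Rightarrow> (nat \<Rightarrow> nat \<Rightarrow> nat \<Rightarrow> 'a::ab_group_add option) \<Rightarrow> bool" where
  "zero_sum_magic_set n k c A \<longleftrightarrow>
     (\<forall>g::'a. \<exists>!p. (case p of (t, i, j) \<Rightarrow> t < c \<and> i < n \<and> j < n \<and> A t i j = Some g)) \<and>
     (\<forall>t<c. \<forall>i<n. card {j. j < n \<and> A t i j \<noteq> None} = k) \<and>
     (\<forall>t<c. \<forall>j<n. card {i. i < n \<and> A t i j \<noteq> None} = k) \<and>
     (\<forall>t<c. \<forall>i<n. (\<Sum>j<n. entry (A t i j)) = 0) \<and>
     (\<forall>t<c. \<forall>j<n. (\<Sum>i<n. entry (A t i j)) = 0)"

definition diagonal_set :: "nat \<Rightarrow> nat \<Rightarrow> nat \<Rightarrow> (nat \<Rightarrow> nat \<Rightarrow> nat \<Rightarrow> 'a option) \<Rightarrow> bool" where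
  "diagonal_set n k c A \<longleftrightarrow> (\<forall>t<c. k_diagonal n k (A t))"

definition in_class_G :: "'a::{ab_group_add,finite} itself \<Rightarrow> bool" where
  "in_class_G _ \<longleftrightarrow> odd (card (UNIV :: 'a set)) \<or> card {x::'a. x \<noteq> 0 \<and> x + x = 0} > 1"

end

theory Submission
  imports Defs
begin


definition Qh :: "'a::ab_group_add \<Rightarrow> 'a \<Rightarrow> 'a \<Rightarrow> nat \<Rightarrow> 'a \<Rightarrow> 'a" where
  "Qh D P h \<mu> y = (if \<mu> = 0 then y else if \<mu> = 1 then y + D else if \<mu> = 2 then P - h - y else - P - D - h - y)"

definition cov :: "'a::ab_group_add \<Rightarrow> 'a \<Rightarrow> 'a set \<Rightarrow> 'a set \<Rightarrow> bool" where
  "cov D P X S \<longleftrightarrow> finite X \<and> 4 * card X \<le> card S \<and> (\<forall>g\<in>S. \<exists>x\<in>X. \<exists>\<mu><4. g = Qh D P 0 \<mu> x)"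

definition hcov :: "'a::ab_group_add \<Rightarrow> 'a \<Rightarrow> 'a set \<Rightarrow> 'a \<Rightarrow> 'a set \<Rightarrow> bool" where
  "hcov D P H h Y \<longleftrightarrow> finite Y \<and> 4 * card Y \<le> card H \<and> (\<forall>z\<in>H. \<exists>y\<in>Y. \<exists>\<mu><4. z = Qh D P h \<mu> y)"

locale cosetsetup =
  fixes H :: "'a::{ab_group_add,finite} set" and D P :: 'a
  assumes H0: "0 \<in> H" and Hadd: "\<And>a b. a\<in>H \<Longrightarrow> b\<in>H \<Longrightarrow> a+b \<in> H"
    and Hneg: "\<And>a. a\<in>H \<Longrightarrow> -a \<in> H"
    and hc: "\<And>g. g + g \<in> H \<Longrightarrow> \<exists>Y. hcov D P H (g+g) Y"
begin

lemma Hdiff: "a\<in>H \<Longrightarrow> b\<in>H \<Longrightarrow> a-b \<in> H"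
  using Hadd Hneg by (metis diff_conv_add_uminus)

definition Sx :: "'a \<Rightarrow> 'a set" where "Sx x = {g. g - x \<in> H \<or> g + x \<in> H}"

lemma Sx_self: "y \<in> Sx y" unfolding Sx_def using H0 by simp

lemma Sx_eq: assumes "z \<in> Sx y" shows "Sx z = Sx y"
proof -
  have A: "g - z \<in> H \<or> g + z \<in> H \<longleftrightarrow> g - y \<in> H \<or> g + y \<in> H" for g
  proof (cases "z - y \<in> H")
    case True
    have e1: "g - z = (g - y) - (z - y)" "g + z = (g + y) + (z - y)"
      "g - y = (g - z) + (z - y)" "g + y = (g + z) - (z - y)" by (simp_all add: algebra_simps)
    show ?thesis using True Hdiff Hadd by (metis e1)
  next
    case False
    then have T: "z + y \<in> H" using assms unfolding Sx_def by simp
    have e1: "g - z = (g + y) - (z + y)" "g + z = (g - y) + (z + y)"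
      "g - y = (g + z) - (z + y)" "g + y = (g - z) + (z + y)" by (simp_all add: algebra_simps)
    show ?thesis using T Hdiff Hadd by (metis e1)
  qed
  show ?thesis unfolding Sx_def using A by blast
qed

lemma card_trans: "card ((+) x ` H) = card H"
  by (simp add: card_image)

lemma single: "\<exists>X. cov D P X (Sx x)"
proof (cases "x + x \<in> H")
  case True
  obtain Y where Y: "hcov D P H (x+x) Y" using hc[OF True] by blast
  have S: "Sx x = (+) x ` H"
  proof (rule set_eqI, rule iffI)
    fix g assume "g \<in> Sx x"
    then have "g - x \<in> H"
    proof (cases "g - x \<in> H")
      case False
      then have "g + x \<in> H" using \<open>g \<in> Sx x\<close> unfolding Sx_def by simp
      moreover have "g - x = (g + x) - (x + x)" by (simp add: algebra_simps)
      ultimately show ?thesis using Hdiff True by metis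
    qed
    then show "g \<in> (+) x ` H" by (rule image_eqI[rotated]) simp
  next
    fix g assume "g \<in> (+) x ` H" then show "g \<in> Sx x" unfolding Sx_def by auto
  qed
  let ?X = "(+) x ` Y"
  have "cov D P ?X (Sx x)"
    unfolding cov_def
  proof (intro conjI ballI)
    show "finite ?X" by simp
    have "card ?X \<le> card Y" by (rule card_image_le) (use Y in \<open>simp add: hcov_def\<close>)
    then show "4 * card ?X \<le> card (Sx x)" using Y unfolding S card_trans hcov_def by linarith
  next
    fix g assume "g \<in> Sx x"
    then have "g - x \<in> H" unfolding S by auto
    then obtain y \<mu> where y: "y \<in> Y" "\<mu> < 4" "g - x = Qh D P (x+x) \<mu> y"
      using Y unfolding hcov_def by blast
    have "g = Qh D P 0 \<mu> (x + y)" using y(3) unfolding Qh_def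
      by (auto simp: algebra_simps split: if_splits)
    then show "\<exists>x'\<in>?X. \<exists>\<mu><4. g = Qh D P 0 \<mu> x'" using y by blast
  qed
  then show ?thesis by blast
next
  case False
  obtain Y where Y: "hcov D P H 0 Y" using hc[of 0] H0 by auto
  have S: "Sx x = (+) x ` H \<union> (+) (-x) ` H"
  proof (rule set_eqI, rule iffI)
    fix g assume "g \<in> Sx x"
    then consider "g - x \<in> H" | "g + x \<in> H" unfolding Sx_def by blast
    then show "g \<in> (+) x ` H \<union> (+) (-x) ` H"
    proof cases
      case 1 then show ?thesis by (intro UnI1 image_eqI[of _ _ "g - x"]) simp_all
    next
      case 2 then show ?thesis by (intro UnI2 image_eqI[of _ _ "g + x"]) simp_all
    qed
  next
    fix g assume "g \<in> (+) x ` H \<union> (+) (-x) ` H"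
    then show "g \<in> Sx x" unfolding Sx_def by auto
  qed
  have disj: "(+) x ` H \<inter> (+) (-x) ` H = {}"
  proof (rule ccontr)
    assume "(+) x ` H \<inter> (+) (-x) ` H \<noteq> {}"
    then obtain a b where ab: "a \<in> H" "b \<in> H" "x + a = -x + b" by auto
    then have "x + x = b - a" by (simp add: algebra_simps)
    then show False using False Hdiff ab by metis
  qed
  have cS: "card (Sx x) = 2 * card H"
    unfolding S by (subst card_Un_disjoint) (use disj card_trans[of x] card_trans[of "-x"] in simp_all)
  let ?X = "(+) x ` Y \<union> (+) (-x) ` Y"
  have "cov D P ?X (Sx x)"
    unfolding cov_def
  proof (intro conjI ballI)
    show "finite ?X" by simp
    have "card ?X \<le> card ((+) x ` Y) + card ((+) (-x) ` Y)" by (rule card_Un_le)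
    also have "\<dots> \<le> card Y + card Y" by (intro add_mono card_image_le) (use Y in \<open>auto simp: hcov_def\<close>)
    finally show "4 * card ?X \<le> card (Sx x)" using Y unfolding cS hcov_def by linarith
  next
    fix g assume "g \<in> Sx x"
    then consider "g - x \<in> H" | "g + x \<in> H" unfolding Sx_def by blast
    then show "\<exists>x'\<in>?X. \<exists>\<mu><4. g = Qh D P 0 \<mu> x'"
    proof cases
      case 1
      then obtain y \<mu> where y: "y \<in> Y" "\<mu> < 4" "g - x = Qh D P 0 \<mu> y"
        using Y unfolding hcov_def by blast
      show ?thesis
      proof (cases "\<mu> \<le> 1")
        case True
        have "g = Qh D P 0 \<mu> (x + y)" using y(3) True unfolding Qh_def
          by (auto simp: algebra_simps split: if_splits)
        then show ?thesis using y by blast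
      next
        case False
        have "g = Qh D P 0 \<mu> (-x + y)" using y(3) False unfolding Qh_def
          by (auto simp: algebra_simps split: if_splits)
        then show ?thesis using y by blast
      qed
    next
      case 2
      then obtain y \<mu> where y: "y \<in> Y" "\<mu> < 4" "g + x = Qh D P 0 \<mu> y"
        using Y unfolding hcov_def by blast
      show ?thesis
      proof (cases "\<mu> \<le> 1")
        case True
        have "g = Qh D P 0 \<mu> (-x + y)" using y(3) True unfolding Qh_def
          by (auto simp: algebra_simps split: if_splits)
        then show ?thesis using y by blast
      next
        case False
        have "g = Qh D P 0 \<mu> (x + y)" using y(3) False unfolding Qh_def
          by (auto simp: algebra_simps split: if_splits)
        then show ?thesis using y by blast
      qed
    qed
  qed
  then show ?thesis by blast
qed

lemma closed_cov: "(\<forall>y\<in>S. Sx y \<subseteq> S) \<Longrightarrow> \<exists>X. cov D P X S"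
proof (induction "card S" arbitrary: S rule: less_induct)
  case less
  show ?case
  proof (cases "S = {}")
    case True
    then show ?thesis unfolding cov_def by (intro exI[of _ "{}"]) auto
  next
    case False
    then obtain x where x: "x \<in> S" by blast
    let ?S' = "S - Sx x"
    have cl: "\<forall>y\<in>?S'. Sx y \<subseteq> ?S'"
    proof
      fix y assume y: "y \<in> ?S'"
      have "Sx y \<inter> Sx x = {}"
      proof (rule ccontr)
        assume "Sx y \<inter> Sx x \<noteq> {}"
        then obtain z where "z \<in> Sx y" "z \<in> Sx x" by blast
        then have "Sx y = Sx x" using Sx_eq by metis
        then show False using y Sx_self by auto
      qed
      then show "Sx y \<subseteq> ?S'" using less.prems y by blast
    qed
    have sub: "Sx x \<subseteq> S" using less.prems x by blast
    have "card ?S' < card S"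
      using x Sx_self by (intro psubset_card_mono) auto
    then obtain X' where X': "cov D P X' ?S'" using less.hyps cl by blast
    obtain X1 where X1: "cov D P X1 (Sx x)" using single by blast
    have cS: "card S = card (Sx x) + card ?S'"
      using sub by (metis card_Diff_subset card_mono finite le_add_diff_inverse)
    have "cov D P (X1 \<union> X') S"
      unfolding cov_def
    proof (intro conjI ballI)
      show "finite (X1 \<union> X')" using X1 X' by (simp add: cov_def)
      have "card (X1 \<union> X') \<le> card X1 + card X'" by (rule card_Un_le)
      then show "4 * card (X1 \<union> X') \<le> card S" using X1 X' cS unfolding cov_def by linarith
    next
      fix g assume "g \<in> S"
      then show "\<exists>x\<in>X1 \<union> X'. \<exists>\<mu><4. g = Qh D P 0 \<mu> x"
        using X1 X' unfolding cov_def by (cases "g \<in> Sx x") blast+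
    qed
    then show ?thesis by blast
  qed
qed

lemma full_cov: "\<exists>X. cov D P X UNIV"
  using closed_cov[of UNIV] by simp

end


definition madd :: "nat \<times> nat \<Rightarrow> nat \<times> nat \<Rightarrow> nat \<times> nat" where
  "madd p q = ((fst p + fst q) mod 4, (snd p + snd q) mod 4)"
definition mneg :: "nat \<times> nat \<Rightarrow> nat \<times> nat" where
  "mneg p = ((4 - fst p) mod 4, (4 - snd p) mod 4)"
definition mq :: "nat \<times> nat \<Rightarrow> nat \<Rightarrow> nat \<times> nat \<Rightarrow> nat \<times> nat" where
  "mq h \<mu> y = (if \<mu> = 0 then y else if \<mu> = 1 then madd y (0,1)
     else if \<mu> = 2 then madd (madd (1,0) (mneg h)) (mneg y)
     else madd (madd (madd (mneg (1,0)) (mneg (0,1))) (mneg h)) (mneg y))"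
definition Z4 :: "(nat \<times> nat) list" where
  "Z4 = List.product [0..<4] [0..<4]"
definition Ytab :: "nat \<times> nat \<Rightarrow> (nat \<times> nat) list" where
  "Ytab h = (if fst h mod 2 = 0 then [(0,0),(0,2),(2,0),(2,2)] else
 if h = (1,0) then [(0,3), (2,1), (1,0), (3,2)] else
 if h = (1,1) then [(0,0), (2,0), (1,0), (3,0)] else
 if h = (1,2) then [(0,0), (2,2), (1,1), (3,3)] else
 if h = (1,3) then [(0,1), (2,1), (1,3), (3,3)] else
 if h = (3,0) then [(0,0), (2,2), (1,3), (3,1)] else
 if h = (3,1) then [(0,0), (2,0), (1,0), (3,0)] else
 if h = (3,2) then [(0,1), (2,3), (1,0), (3,2)] else
 [(0,3), (2,3), (1,1), (3,1)])"

lemma model_check: "list_all (\<lambda>h. list_all (\<lambda>z. list_ex (\<lambda>y. list_ex (\<lambda>\<mu>. z = mq h \<mu> y) [0,1,2,3]) (Ytab h)) Z4) Z4"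
  by code_simp


fun nsm :: "nat \<Rightarrow> 'a::monoid_add \<Rightarrow> 'a" where
  "nsm 0 f = 0" | "nsm (Suc a) f = f + nsm a f"

lemma nsm_1[simp]: "nsm 1 f = f" by (simp add: One_nat_def)
lemma nsm_2[simp]: "nsm 2 f = f + f" by (simp add: numeral_2_eq_2)
lemma nsm_3[simp]: "nsm 3 f = f + (f + f)" by (simp add: numeral_3_eq_3)

lemma nsm_add: "nsm (a + b) f = nsm a f + nsm b f"
  by (induction a) (simp_all add: add.assoc)

lemma nsm_4: "f + f + f + f = (0::'a::ab_group_add) \<Longrightarrow> nsm (4 * q) f = 0"
proof (induction q)
  case (Suc q)
  have "4 * Suc q = 4 + 4 * q" by simp
  then have "nsm (4 * Suc q) f = nsm 4 f + nsm (4*q) f" by (simp only: nsm_add)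
  then show ?case using Suc by (simp add: eval_nat_numeral add.assoc[symmetric])
qed simp

lemma nsm_mod: "f + f + f + f = (0::'a::ab_group_add) \<Longrightarrow> nsm (a mod 4) f = nsm a f"
proof -
  assume h: "f + f + f + f = 0"
  have "nsm a f = nsm (4 * (a div 4) + a mod 4) f" by simp
  also have "\<dots> = nsm (a mod 4) f" by (simp only: nsm_add nsm_4[OF h]) simp
  finally show ?thesis by simp
qed

lemma kern_aux: fixes f1 f2 :: "'a::ab_group_add"
  assumes "x1 + x2 = 0" "x1 = (if a = (0::nat) then 0 else f1 + f1)" "x2 = (if b = (0::nat) then 0 else f2 + f2)"
  "f1 + f1 \<noteq> 0" "f2 + f2 \<noteq> 0" "f1 + f1 + (f2 + f2) \<noteq> 0"
  shows "a = 0 \<and> b = 0"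
  using assms by (cases "a = 0"; cases "b = 0") simp_all

lemma aux4: "(a::nat) < 4 \<Longrightarrow> b < 4 \<Longrightarrow> (a + (4 - b) mod 4) mod 4 = 0 \<Longrightarrow> a = b"
proof -
  assume "a < 4" "b < 4" "(a + (4 - b) mod 4) mod 4 = 0"
  moreover have "a = 0 \<or> a = 1 \<or> a = 2 \<or> a = 3" "b = 0 \<or> b = 1 \<or> b = 2 \<or> b = 3" using calculation by auto
  ultimately show "a = b" by (elim disjE) simp_all
qed

locale caseB =
  fixes f1 f2 :: "'a::{ab_group_add,finite}"
  assumes f1: "f1 + f1 + f1 + f1 = 0" and f2: "f2 + f2 + f2 + f2 = 0"
    and e1: "f1 + f1 \<noteq> 0" and e2: "f2 + f2 \<noteq> 0" and e12: "f1 + f1 \<noteq> f2 + f2"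
begin

definition phi :: "nat \<times> nat \<Rightarrow> 'a" where "phi p = nsm (fst p) f1 + nsm (snd p) f2"

lemma mod1: "nsm (a mod 4) f1 = nsm a f1" using nsm_mod[OF f1] .
lemma mod2: "nsm (a mod 4) f2 = nsm a f2" using nsm_mod[OF f2] .

lemma phi_add: "phi (madd p q) = phi p + phi q"
  unfolding phi_def madd_def by (simp add: mod1 mod2 nsm_add algebra_simps)

lemma phi_neg: assumes "fst p \<le> 4" "snd p \<le> 4" shows "phi (mneg p) = - phi p"
proof -
  have a: "nsm (4 - a) f + nsm a f = 0" if "a \<le> 4" "f + f + f + f = 0" for a and f :: 'a
  proof -
    have "nsm (4 - a) f + nsm a f = nsm (4 * 1) f" using nsm_add[of "4 - a" a f] that by simp
    then show ?thesis using nsm_4[OF that(2), of 1] by simp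
  qed
  have "phi (mneg p) + phi p = nsm (4 - fst p) f1 + nsm (fst p) f1 + (nsm (4 - snd p) f2 + nsm (snd p) f2)"
    unfolding phi_def mneg_def by (simp add: mod1 mod2 algebra_simps)
  also have "\<dots> = 0" using a[of "fst p" f1] a[of "snd p" f2] assms f1 f2 by simp
  finally have "phi (mneg p) + phi p = 0" .
  then show ?thesis by (simp add: eq_neg_iff_add_eq_0)
qed

lemma Z4_set: "set Z4 = {p. fst p < 4 \<and> snd p < 4}"
  unfolding Z4_def by (auto simp: mem_Times_iff)

lemma madd_Z4: "madd p q \<in> set Z4" unfolding Z4_set madd_def by simp
lemma mneg_Z4: "mneg p \<in> set Z4" unfolding Z4_set mneg_def by simp

lemma Ytab_Z4: "set (Ytab h) \<subseteq> set Z4"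
  unfolding Ytab_def Z4_set by auto

lemma kernel: assumes "r \<in> set Z4" "phi r = 0" shows "r = (0,0)"
proof -
  have d: "phi (madd r r) = 0" using assms(2) phi_add by simp
  have e3: "f1 + f1 + (f2 + f2) \<noteq> 0"
  proof
    assume "f1 + f1 + (f2 + f2) = 0"
    then have "f1 + f1 = - (f2 + f2)" by (metis eq_neg_iff_add_eq_0)
    also have "\<dots> = f2 + f2" using f2 by (metis add.assoc eq_neg_iff_add_eq_0 minus_minus)
    finally show False using e12 by simp
  qed
  obtain a b where r: "r = (a,b)" "a < 4" "b < 4" using assms(1) unfolding Z4_set by (cases r) auto
  have dd: "nsm ((x+x) mod 4) f = (if even x then 0 else f + f)" if "x < 4" for x and f :: 'a
  proof -
    have "x = 0 \<or> x = 1 \<or> x = 2 \<or> x = 3" using that by auto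
    then show ?thesis by (elim disjE) simp_all
  qed
  have "nsm ((a+a) mod 4) f1 + nsm ((b+b) mod 4) f2 = 0" using d r(1) unfolding phi_def madd_def by simp
  then have ev: "even a \<and> even b" using dd[OF r(2), of f1] dd[OF r(3), of f2] e1 e2 e3
    by (cases "even a"; cases "even b") simp_all
  have ab: "(a = 0 \<or> a = 2) \<and> (b = 0 \<or> b = 2)" using ev r(2,3) by presburger
  have "nsm a f1 + nsm b f2 = 0" using assms(2) r(1) unfolding phi_def by simp
  moreover have "nsm a f1 = (if a = 0 then 0 else f1 + f1)" using ab by auto
  moreover have "nsm b f2 = (if b = 0 then 0 else f2 + f2)" using ab by auto
  ultimately have "a = 0 \<and> b = 0" using kern_aux[of "nsm a f1" "nsm b f2" a f1 b f2] e1 e2 e3 by blast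
  then show ?thesis using r(1) by simp
qed


lemma phi_10: "phi (1,0) = f1" unfolding phi_def by simp
lemma phi_01: "phi (0,1) = f2" unfolding phi_def by simp

lemma mem_Z4: "p \<in> set Z4 \<longleftrightarrow> fst p < 4 \<and> snd p < 4" unfolding Z4_set by simp

lemma inj_phi: "inj_on phi (set Z4)"
proof (rule inj_onI)
  fix p q assume pq: "p \<in> set Z4" "q \<in> set Z4" "phi p = phi q"
  have "phi (madd p (mneg q)) = 0"
    using pq phi_add phi_neg[of q] unfolding mem_Z4 by simp
  then have "madd p (mneg q) = (0,0)" using kernel madd_Z4 by blast
  then have "(fst p + (4 - fst q) mod 4) mod 4 = 0 \<and> (snd p + (4 - snd q) mod 4) mod 4 = 0"
    by (simp only: madd_def mneg_def prod.inject fst_conv snd_conv)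
  then have m: "(fst p + (4 - fst q) mod 4) mod 4 = 0" "(snd p + (4 - snd q) mod 4) mod 4 = 0" by blast+
  have b: "fst p < 4" "snd p < 4" "fst q < 4" "snd q < 4" using pq(1,2) unfolding mem_Z4 by simp_all
  have "fst p = fst q" by (rule aux4[OF b(1,3) m(1)])
  moreover have "snd p = snd q" by (rule aux4[OF b(2,4) m(2)])
  ultimately show "p = q" by (simp add: prod_eq_iff)
qed

definition HB :: "'a set" where "HB = phi ` set Z4"

lemma card_Z4: "card (set Z4) = 16"
proof -
  have "set Z4 = {0..<4} \<times> {0..<4::nat}" unfolding Z4_def by simp
  then show ?thesis by (simp add: card_cartesian_product)
qed

lemma card_HB: "card HB = 16"
  unfolding HB_def using card_image[OF inj_phi] card_Z4 by simp

lemma phi_mq: assumes "h \<in> set Z4" "y \<in> set Z4"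
  shows "phi (mq h \<mu> y) = Qh f2 f1 (phi h) \<mu> (phi y)"
proof -
  have n: "phi (mneg p) = - phi p" if "p \<in> set Z4" for p
    using phi_neg that unfolding mem_Z4 by simp
  have n10: "phi (mneg (1,0)) = - f1" using phi_neg[of "(1,0)"] phi_10 by simp
  have n01: "phi (mneg (0,1)) = - f2" using phi_neg[of "(0,1)"] phi_01 by simp
  show ?thesis unfolding mq_def Qh_def
    using n[OF assms(1)] n[OF assms(2)] n10 n01 phi_10 phi_01
    by (simp add: phi_add algebra_simps)
qed

lemma len_Ytab: "length (Ytab h) = 4" unfolding Ytab_def by simp

lemma hcovB: assumes "h \<in> set Z4" shows "hcov f2 f1 HB (phi h) (phi ` set (Ytab h))"
  unfolding hcov_def
proof (intro conjI ballI)
  show "finite (phi ` set (Ytab h))" by simp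
  have "card (phi ` set (Ytab h)) \<le> card (set (Ytab h))" by (rule card_image_le) simp
  also have "\<dots> \<le> length (Ytab h)" by (rule card_length)
  finally show "4 * card (phi ` set (Ytab h)) \<le> card HB" using len_Ytab card_HB by simp
next
  fix z assume "z \<in> HB"
  then obtain z' where z': "z' \<in> set Z4" "z = phi z'" unfolding HB_def by auto
  have "\<exists>y\<in>set (Ytab h). \<exists>\<mu>\<in>set [0,1,2,3]. z' = mq h \<mu> y"
    using model_check assms z'(1) unfolding list_all_iff list_ex_iff by blast
  then obtain y \<mu> where y0: "y \<in> set (Ytab h)" "\<mu> \<in> set [0,1,2,3]" "z' = mq h \<mu> y" by blast
  then have y: "y \<in> set (Ytab h)" "\<mu> < 4" "z' = mq h \<mu> y" by auto
  have yZ: "y \<in> set Z4" using y(1) Ytab_Z4 by blast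
  have "z = Qh f2 f1 (phi h) \<mu> (phi y)" using z'(2) y(3) phi_mq[OF assms yZ] by simp
  then show "\<exists>y\<in>phi ` set (Ytab h). \<exists>\<mu><4. z = Qh f2 f1 (phi h) \<mu> y" using y by blast
qed

lemma covB: "\<exists>X. cov f2 f1 X UNIV"
proof -
  interpret cosetsetup HB f2 f1
  proof
    show "0 \<in> HB" unfolding HB_def
      by (rule image_eqI[of _ _ "(0,0)"]) (simp_all add: phi_def mem_Z4)
  next
    fix a b assume "a \<in> HB" "b \<in> HB"
    then obtain p q where "p \<in> set Z4" "q \<in> set Z4" "a = phi p" "b = phi q" unfolding HB_def by auto
    then show "a + b \<in> HB" unfolding HB_def using phi_add madd_Z4 by (metis image_eqI)
  next
    fix a assume "a \<in> HB"
    then obtain p where "p \<in> set Z4" "a = phi p" unfolding HB_def by auto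
    then show "- a \<in> HB" unfolding HB_def using phi_neg mneg_Z4 mem_Z4
      by (metis image_eqI less_imp_le)
  next
    fix g assume "g + g \<in> HB"
    then obtain p where "p \<in> set Z4" "g + g = phi p" unfolding HB_def by auto
    then show "\<exists>Y. hcov f2 f1 HB (g + g) Y" using hcovB by metis
  qed
  show ?thesis by (rule full_cov)
qed

end

locale caseA =
  fixes t D :: "'a::{ab_group_add,finite}"
  assumes tt: "t + t = 0" and DD: "D + D = 0" and D0: "D \<noteq> 0" and t0: "t \<noteq> 0" and tD: "t \<noteq> D"
    and nt: "\<And>g. g + g \<noteq> t" and ntD: "\<And>g. g + g \<noteq> t + D"
begin

lemma negt: "- t = t" using tt by (metis add_eq_0_iff2)
lemma negD: "- D = D" using DD by (metis add_eq_0_iff2)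

definition HA :: "'a set" where "HA = {0, D, t, t + D}"

lemma tD0: "t + D \<noteq> 0" using tD negD by (metis add_eq_0_iff2)

lemma card_HA: "card HA = 4"
  unfolding HA_def using D0 t0 tD tD0 by (auto simp: card_insert_if)

lemma covA: "\<exists>X. cov D t X UNIV"
proof -
  have ac: "D + (t + D) = t" "t + (t + D) = D" "t + D + D = t" "t + D + t = D" "D + t = t + D"
    "t + D + (t + D) = 0"
    using tt DD by (simp_all add: algebra_simps add.assoc[symmetric])
  have F2: "- t - D - D = t"
  proof -
    have "- t - D - D = - t - (D + D)" by (simp add: algebra_simps)
    then show ?thesis using DD negt by simp
  qed
  have F3: "- t - D = t + D" using negt negD by (metis add.commute diff_conv_add_uminus)
  have F4: "t - D = t + D" using negD by (metis diff_conv_add_uminus)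
  interpret cosetsetup HA D t
  proof
    show "0 \<in> HA" unfolding HA_def by simp
  next
    fix a b assume "a \<in> HA" "b \<in> HA"
    then show "a + b \<in> HA" unfolding HA_def using tt DD ac by auto
  next
    fix a assume "a \<in> HA"
    then show "- a \<in> HA" unfolding HA_def using negt negD by (auto simp: algebra_simps)
  next
    fix g assume g: "g + g \<in> HA"
    then have h: "g + g = 0 \<or> g + g = D" unfolding HA_def using nt ntD by auto
    show "\<exists>Y. hcov D t HA (g + g) Y"
    proof (rule exI[of _ "{0}"])
      show "hcov D t HA (g + g) {0}" unfolding hcov_def
      proof (intro conjI ballI)
        show "finite {0::'a}" by simp
        show "4 * card {0::'a} \<le> card HA" using card_HA by simp
      next
        fix z assume "z \<in> HA"
        then consider "z = 0" | "z = D" | "z = t" | "z = t + D" unfolding HA_def by auto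
        then show "\<exists>y\<in>{0}. \<exists>\<mu><4. z = Qh D t (g + g) \<mu> y"
        proof cases
          case 1 then show ?thesis by (intro bexI[of _ 0] exI[of _ 0]) (simp_all add: Qh_def)
        next
          case 2 then show ?thesis by (intro bexI[of _ 0] exI[of _ 1]) (simp_all add: Qh_def)
        next
          case 3 then show ?thesis using h
          proof (elim disjE)
            assume "g + g = 0" then show ?thesis using 3
              by (intro bexI[of _ 0] exI[of _ 2]) (simp_all add: Qh_def)
          next
            assume "g + g = D" then show ?thesis using 3 F2
              by (intro bexI[of _ 0] exI[of _ 3]) (simp_all add: Qh_def)
          qed
        next
          case 4 then show ?thesis using h
          proof (elim disjE)
            assume "g + g = 0" then show ?thesis using 4 F3
              by (intro bexI[of _ 0] exI[of _ 3]) (simp_all add: Qh_def)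
          next
            assume "g + g = D" then show ?thesis using 4 F4
              by (intro bexI[of _ 0] exI[of _ 2]) (simp_all add: Qh_def)
          qed
        qed
      qed
    qed
  qed
  show ?thesis by (rule full_cov)
qed

end



lemma sub_mod: assumes "d \<le> n" "0 < n"
  shows "int ((x + n - d) mod n) = (int x - int d) mod int n"
proof -
  have "int ((x + n - d) mod n) = int (x + n - d) mod int n" by (simp add: of_nat_mod)
  also have "int (x + n - d) = (int x - int d) + int n" using assms by simp
  also have "((int x - int d) + int n) mod int n = (int x - int d) mod int n" by simp
  finally show ?thesis .
qed

lemma add_mod_int: "int ((x + d) mod n) = (int x + int d) mod int n"
  by (simp add: of_nat_mod)

lemma sum4: "(\<Sum>d<4*(m::nat). f d) = (\<Sum>\<beta><m. f (4*\<beta>) + f (4*\<beta>+1) + f (4*\<beta>+2) + f (4*\<beta>+3))"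
proof (induction m)
  case (Suc m)
  have "4 * Suc m = Suc (Suc (Suc (Suc (4*m))))" by simp
  then have "(\<Sum>d<4*Suc m. f d) = (\<Sum>d<4*m. f d) + f (4*m) + f (4*m+1) + f (4*m+2) + f (4*m+3)"
    by (simp add: add.assoc eval_nat_numeral)
  then show ?case using Suc by (simp add: add.assoc)
qed simp

lemma sum_if_lt: "K \<le> (n::nat) \<Longrightarrow> (\<Sum>d<n. if d < K then f d else (0::'a::comm_monoid_add)) = (\<Sum>d<K. f d)"
proof -
  assume "K \<le> n"
  have "(\<Sum>d<n. if d < K then f d else 0) = (\<Sum>d\<in>{..<n} \<inter> {d. d < K}. f d)"
    using sum.inter_restrict[of "{..<n}" f "{d. d < K}"] by simp
  also have "{..<n} \<inter> {d. d < K} = {..<K}" using \<open>K \<le> n\<close> by auto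
  finally show ?thesis .
qed

lemma bij_mod: assumes "0 < (n::nat)" "\<And>x. x < n \<Longrightarrow> h x < n" "\<And>x y. x < n \<Longrightarrow> y < n \<Longrightarrow> h x = h y \<Longrightarrow> x = y"
  shows "bij_betw h {..<n} {..<n}"
proof -
  have inj: "inj_on h {..<n}" using assms(3) by (auto intro: inj_onI)
  have "h ` {..<n} \<subseteq> {..<n}" using assms(2) by auto
  then have "h ` {..<n} = {..<n}" using endo_inj_surj[OF _ _ inj] by simp
  then show ?thesis using inj by (simp add: bij_betw_def)
qed

locale arr =
  fixes n m c :: nat and D P :: "'a::{ab_group_add,finite}" and b :: "nat \<Rightarrow> 'a"
  assumes n4: "4*m \<le> n" and m1: "1 \<le> m" and c1: "1 \<le> c"
    and cardU: "card (UNIV::'a set) = n * (4*m) * c"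
    and bcov: "\<And>g. \<exists>w<c*m*n. \<exists>\<mu><4. g = Qh D P 0 \<mu> (b w)"
begin

lemma npos: "0 < n" using n4 m1 by linarith

definition dd :: "nat \<Rightarrow> nat \<Rightarrow> nat" where "dd i j = (j + n - i) mod n"

definition aa :: "nat \<Rightarrow> nat \<Rightarrow> int \<Rightarrow> 'a" where
  "aa t \<beta> z = b ((t*m+\<beta>)*n + nat (z mod int n))"

definition val :: "nat \<Rightarrow> nat \<Rightarrow> nat \<Rightarrow> 'a" where
  "val t i d = (let \<beta> = d div 4; \<mu> = d mod 4; r = int i in
     if \<mu> = 0 then aa t \<beta> r else if \<mu> = 1 then P - aa t \<beta> (r+1)
     else if \<mu> = 2 then - P - D - aa t \<beta> r else aa t \<beta> (r+1) + D)"

definition AA :: "nat \<Rightarrow> nat \<Rightarrow> nat \<Rightarrow> 'a option" where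
  "AA t i j = (if dd i j < 4*m then Some (val t i (dd i j)) else None)"

lemma dd_int: "i < n \<Longrightarrow> int (dd i j) = (int j - int i) mod int n"
  unfolding dd_def using sub_mod npos by simp

lemma dd_lt: "dd i j < n" unfolding dd_def using npos by simp

lemma L_row: assumes "i < n" "d < n" shows "dd i ((i+d) mod n) = d"
proof -
  have "int (dd i ((i+d) mod n)) = ((int i + int d) mod int n - int i) mod int n"
    using dd_int[OF assms(1)] add_mod_int by simp
  also have "\<dots> = int d" using assms by (simp add: mod_diff_left_eq)
  finally show ?thesis by simp
qed

lemma L_row2: assumes "i < n" "j < n" shows "(i + dd i j) mod n = j"
proof -
  have "int ((i + dd i j) mod n) = (int i + (int j - int i) mod int n) mod int n"
    using dd_int[OF assms(1)] add_mod_int by simp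
  also have "\<dots> = int j" using assms by (simp add: mod_add_right_eq)
  finally show ?thesis by simp
qed

lemma L_col: assumes "j < n" "d < n" shows "dd ((j+n-d) mod n) j = d"
proof -
  have "int (dd ((j+n-d) mod n) j) = (int j - (int j - int d) mod int n) mod int n"
    using dd_int[of "(j+n-d) mod n" j] sub_mod[of d n j] assms npos by simp
  also have "\<dots> = int d" using assms by (simp add: mod_diff_right_eq)
  finally show ?thesis by simp
qed

lemma L_col2: assumes "i < n" "j < n" shows "(j + n - dd i j) mod n = i"
proof -
  have "int ((j + n - dd i j) mod n) = (int j - (int j - int i) mod int n) mod int n"
    using dd_int[OF assms(1)] sub_mod[of "dd i j" n j] dd_lt npos by (simp add: less_imp_le)
  also have "\<dots> = int i" using assms by (simp add: mod_diff_right_eq)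
  finally show ?thesis by simp
qed

lemma aa_mod: "aa t \<beta> (z mod int n + e) = aa t \<beta> (z + e)"
  unfolding aa_def by (simp add: mod_add_left_eq)

lemma aa_mod': "aa t \<beta> (e + z mod int n) = aa t \<beta> (e + z)"
  unfolding aa_def by (simp add: mod_add_right_eq)

lemma aa_mod0: "aa t \<beta> (z mod int n) = aa t \<beta> z"
  unfolding aa_def by simp

lemma dm: "e < 4 \<Longrightarrow> (4*\<beta>+e) div 4 = (\<beta>::nat) \<and> (4*\<beta>+e) mod 4 = e" by presburger

lemma val0: "val t i (4*\<beta>) = aa t \<beta> (int i)"
  using dm[of 0 \<beta>] unfolding val_def Let_def by simp
lemma val1: "val t i (4*\<beta>+1) = P - aa t \<beta> (int i + 1)"
  using dm[of 1 \<beta>] unfolding val_def Let_def by simp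
lemma val2: "val t i (4*\<beta>+2) = - P - D - aa t \<beta> (int i)"
  using dm[of 2 \<beta>] unfolding val_def Let_def by simp
lemma val3: "val t i (4*\<beta>+3) = aa t \<beta> (int i + 1) + D"
  using dm[of 3 \<beta>] unfolding val_def Let_def by simp

lemma group_zero: "val t i (4*\<beta>) + val t i (4*\<beta>+1) + val t i (4*\<beta>+2) + val t i (4*\<beta>+3) = 0"
  unfolding val0 val1 val2 val3 by (simp add: algebra_simps)

lemma row_sum: assumes "i < n" shows "(\<Sum>j<n. entry (AA t i j)) = 0"
proof -
  have bij: "bij_betw (\<lambda>d. (i+d) mod n) {..<n} {..<n}"
    by (rule bij_mod[OF npos]) (use npos L_row assms in \<open>simp, metis\<close>)
  have "(\<Sum>j<n. entry (AA t i j)) = (\<Sum>d<n. entry (AA t i ((i+d) mod n)))"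
    using sum.reindex_bij_betw[OF bij, of "\<lambda>j. entry (AA t i j)"] by simp
  also have "\<dots> = (\<Sum>d<n. if d < 4*m then val t i d else 0)"
    by (rule sum.cong) (simp_all add: AA_def L_row assms entry_def)
  also have "\<dots> = (\<Sum>d<4*m. val t i d)" by (rule sum_if_lt[OF n4])
  also have "\<dots> = 0" unfolding sum4 group_zero by simp
  finally show ?thesis .
qed

lemma col_group: assumes "j < n" "4*\<beta>+3 < n"
  shows "val t ((j+n-(4*\<beta>)) mod n) (4*\<beta>) + val t ((j+n-(4*\<beta>+1)) mod n) (4*\<beta>+1)
       + val t ((j+n-(4*\<beta>+2)) mod n) (4*\<beta>+2) + val t ((j+n-(4*\<beta>+3)) mod n) (4*\<beta>+3) = 0"
proof -
  have r: "int ((j+n-(4*\<beta>+e)) mod n) = (int j - int (4*\<beta>+e)) mod int n" if "e \<le> 3" for e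
    using sub_mod[of "4*\<beta>+e" n j] assms that npos by simp
  have "val t ((j+n-(4*\<beta>)) mod n) (4*\<beta>) = aa t \<beta> (int j - 4*int \<beta>)"
    unfolding val0 using r[of 0] by (simp add: aa_mod0)
  moreover have "val t ((j+n-(4*\<beta>+1)) mod n) (4*\<beta>+1) = P - aa t \<beta> (int j - 4*int \<beta>)"
    unfolding val1 using r[of 1] by (simp add: aa_mod aa_mod' algebra_simps)
  moreover have "val t ((j+n-(4*\<beta>+2)) mod n) (4*\<beta>+2) = - P - D - aa t \<beta> (int j - 4*int \<beta> - 2)"
    unfolding val2 using r[of 2] by (simp add: aa_mod0 algebra_simps)
  moreover have "val t ((j+n-(4*\<beta>+3)) mod n) (4*\<beta>+3) = aa t \<beta> (int j - 4*int \<beta> - 2) + D"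
    unfolding val3 using r[of 3] by (simp add: aa_mod aa_mod' algebra_simps)
  ultimately show ?thesis by (simp add: algebra_simps)
qed

lemma col_sum: assumes "j < n" shows "(\<Sum>i<n. entry (AA t i j)) = 0"
proof -
  have bij: "bij_betw (\<lambda>d. (j+n-d) mod n) {..<n} {..<n}"
    by (rule bij_mod[OF npos]) (use npos L_col assms in \<open>simp, metis\<close>)
  have "(\<Sum>i<n. entry (AA t i j)) = (\<Sum>d<n. entry (AA t ((j+n-d) mod n) j))"
    using sum.reindex_bij_betw[OF bij, of "\<lambda>i. entry (AA t i j)"] by simp
  also have "\<dots> = (\<Sum>d<n. if d < 4*m then val t ((j+n-d) mod n) d else 0)"
    by (rule sum.cong) (simp_all add: AA_def L_col assms entry_def)
  also have "\<dots> = (\<Sum>d<4*m. val t ((j+n-d) mod n) d)" by (rule sum_if_lt[OF n4])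
  also have "\<dots> = 0" unfolding sum4
  proof (rule sum.neutral, rule ballI)
    fix \<beta> assume "\<beta> \<in> {..<m}"
    then have "4*\<beta>+3 < n" using n4 by simp
    then show "val t ((j+n-(4*\<beta>)) mod n) (4*\<beta>) + val t ((j+n-(4*\<beta>+1)) mod n) (4*\<beta>+1)
       + val t ((j+n-(4*\<beta>+2)) mod n) (4*\<beta>+2) + val t ((j+n-(4*\<beta>+3)) mod n) (4*\<beta>+3) = 0"
      using col_group assms by blast
  qed
  finally show ?thesis .
qed

end


context arr begin

lemma row_count: assumes "i < n" shows "card {j. j < n \<and> AA t i j \<noteq> None} = 4*m"
proof -
  have "{j. j < n \<and> AA t i j \<noteq> None} = (\<lambda>d. (i+d) mod n) ` {..<4*m}"
  proof (rule set_eqI, rule iffI)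
    fix j assume "j \<in> {j. j < n \<and> AA t i j \<noteq> None}"
    then have j: "j < n" "dd i j < 4*m" unfolding AA_def by (auto split: if_splits)
    show "j \<in> (\<lambda>d. (i+d) mod n) ` {..<4*m}"
      using j L_row2[OF assms j(1)] by (intro image_eqI[of _ _ "dd i j"]) auto
  next
    fix j assume "j \<in> (\<lambda>d. (i+d) mod n) ` {..<4*m}"
    then obtain d where d: "d < 4*m" "j = (i+d) mod n" by auto
    then have "dd i j = d" using L_row[OF assms, of d] n4 by simp
    then show "j \<in> {j. j < n \<and> AA t i j \<noteq> None}" using d npos unfolding AA_def by simp
  qed
  moreover have "inj_on (\<lambda>d. (i+d) mod n) {..<4*m}"
  proof (rule inj_onI)
    fix x y assume "x \<in> {..<4*m}" "y \<in> {..<4*m}" "(i + x) mod n = (i + y) mod n"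
    then show "x = y" using L_row[OF assms, of x] L_row[OF assms, of y] n4 by (metis lessThan_iff order_less_le_trans)
  qed
  ultimately show ?thesis by (simp add: card_image)
qed

lemma col_count: assumes "j < n" shows "card {i. i < n \<and> AA t i j \<noteq> None} = 4*m"
proof -
  have "{i. i < n \<and> AA t i j \<noteq> None} = (\<lambda>d. (j+n-d) mod n) ` {..<4*m}"
  proof (rule set_eqI, rule iffI)
    fix i assume "i \<in> {i. i < n \<and> AA t i j \<noteq> None}"
    then have i: "i < n" "dd i j < 4*m" unfolding AA_def by (auto split: if_splits)
    show "i \<in> (\<lambda>d. (j+n-d) mod n) ` {..<4*m}"
      using i L_col2[OF i(1) assms] by (intro image_eqI[of _ _ "dd i j"]) auto
  next
    fix i assume "i \<in> (\<lambda>d. (j+n-d) mod n) ` {..<4*m}"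
    then obtain d where d: "d < 4*m" "i = (j+n-d) mod n" by auto
    then have "dd i j = d" using L_col[OF assms, of d] n4 by simp
    then show "i \<in> {i. i < n \<and> AA t i j \<noteq> None}" using d npos unfolding AA_def by simp
  qed
  moreover have "inj_on (\<lambda>d. (j+n-d) mod n) {..<4*m}"
  proof (rule inj_onI)
    fix x y assume "x \<in> {..<4*m}" "y \<in> {..<4*m}" "(j+n-x) mod n = (j+n-y) mod n"
    then show "x = y" using L_col[OF assms, of x] L_col[OF assms, of y] n4 by (metis lessThan_iff order_less_le_trans)
  qed
  ultimately show ?thesis by (simp add: card_image)
qed

lemma diag: "k_diagonal n (4*m) (AA t)"
  unfolding k_diagonal_def
proof (intro exI[of _ 0] conjI allI impI)
  show "0 < n" by (rule npos)
  fix i j assume ij: "i < n" "j < n"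
  have "AA t i j \<noteq> None \<longleftrightarrow> int (dd i j) < int (4*m)" unfolding AA_def by simp
  also have "\<dots> \<longleftrightarrow> (int j - int i - int 0) mod int n < int (4*m)" using dd_int[OF ij(1)] by simp
  finally show "AA t i j \<noteq> None \<longleftrightarrow> (int j - int i - int 0) mod int n < int (4*m)" .
qed

lemma exist_pos: "\<exists>t i j. t < c \<and> i < n \<and> j < n \<and> AA t i j = Some g"
proof -
  obtain w \<mu> where w: "w < c*m*n" "\<mu> < 4" "g = Qh D P 0 \<mu> (b w)" using bcov by blast
  define l where "l = w mod n"
  define u where "u = w div n"
  define \<beta> where "\<beta> = u mod m"
  define t where "t = u div m"
  have l: "l < n" unfolding l_def using npos by simp
  have u: "u < c*m" unfolding u_def using w(1) by (simp add: less_mult_imp_div_less)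
  have tc: "t < c" unfolding t_def using u by (simp add: less_mult_imp_div_less)
  have bm: "\<beta> < m" unfolding \<beta>_def using m1 by simp
  have wl: "w = (t*m+\<beta>)*n + l" unfolding t_def \<beta>_def u_def l_def by simp
  have bw: "b w = aa t \<beta> (int l)" unfolding aa_def wl using l by simp
  define i' where "i' = (l + n - 1) mod n"
  have i': "i' < n" unfolding i'_def using npos by simp
  have ai': "aa t \<beta> (int i' + 1) = b w"
  proof -
    have "int i' = (int l - 1) mod int n" unfolding i'_def using sub_mod[of 1 n l] npos by simp
    then show ?thesis using bw aa_mod[of t \<beta> "int l - 1" 1] by simp
  qed
  have "\<exists>i d. i < n \<and> d < 4*m \<and> val t i d = g"
  proof -
    have "\<mu> = 0 \<or> \<mu> = 1 \<or> \<mu> = 2 \<or> \<mu> = 3" using w(2) by auto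
    then show ?thesis
    proof (elim disjE)
      assume "\<mu> = 0" then have "g = b w" using w(3) by (simp add: Qh_def)
      then have "l < n \<and> 4*\<beta> < 4*m \<and> val t l (4*\<beta>) = g" using bw l bm val0[of t l \<beta>] by simp
      then show ?thesis by blast
    next
      assume "\<mu> = 1" then have "g = b w + D" using w(3) by (simp add: Qh_def)
      then have "i' < n \<and> 4*\<beta>+3 < 4*m \<and> val t i' (4*\<beta>+3) = g" using ai' i' bm val3[of t i' \<beta>] by simp
      then show ?thesis by blast
    next
      assume "\<mu> = 2" then have "g = P - b w" using w(3) by (simp add: Qh_def)
      then have "i' < n \<and> 4*\<beta>+1 < 4*m \<and> val t i' (4*\<beta>+1) = g" using ai' i' bm val1[of t i' \<beta>] by simp
      then show ?thesis by blast
    next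
      assume "\<mu> = 3" then have "g = - P - D - b w" using w(3) by (simp add: Qh_def)
      then have "l < n \<and> 4*\<beta>+2 < 4*m \<and> val t l (4*\<beta>+2) = g" using bw l bm val2[of t l \<beta>] by simp
      then show ?thesis by blast
    qed
  qed
  then obtain i d where id: "i < n" "d < 4*m" "val t i d = g" by blast
  have "dd i ((i+d) mod n) = d" using L_row[OF id(1), of d] id(2) n4 by simp
  then have "AA t i ((i+d) mod n) = Some g" unfolding AA_def using id by simp
  then show ?thesis using tc id(1) npos by (intro exI[of _ t] exI[of _ i] exI[of _ "(i+d) mod n"]) simp
qed

definition Pos :: "(nat \<times> nat \<times> nat) set" where
  "Pos = {(t,i,j). t < c \<and> i < n \<and> j < n \<and> AA t i j \<noteq> None}"

definition FF :: "nat \<times> nat \<times> nat \<Rightarrow> 'a" where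
  "FF p = the (AA (fst p) (fst (snd p)) (snd (snd p)))"

lemma card_Pos: "card Pos = c * n * (4*m)"
proof -
  let ?f = "\<lambda>(t,i,d). (t, i, (i+d) mod n)"
  have "Pos = ?f ` ({..<c} \<times> {..<n} \<times> {..<4*m})"
  proof (rule set_eqI, rule iffI)
    fix p assume "p \<in> Pos"
    then obtain t i j where p: "p = (t,i,j)" "t < c" "i < n" "j < n" "AA t i j \<noteq> None"
      unfolding Pos_def by auto
    then have "dd i j < 4*m" unfolding AA_def by (auto split: if_splits)
    then show "p \<in> ?f ` ({..<c} \<times> {..<n} \<times> {..<4*m})"
      using p L_row2[OF p(3) p(4)] by (intro image_eqI[of _ _ "(t,i,dd i j)"]) auto
  next
    fix p assume "p \<in> ?f ` ({..<c} \<times> {..<n} \<times> {..<4*m})"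
    then obtain t i d where p: "p = (t,i,(i+d) mod n)" "t < c" "i < n" "d < 4*m" by auto
    then have "dd i ((i+d) mod n) = d" using L_row[OF p(3), of d] n4 by simp
    then show "p \<in> Pos" unfolding Pos_def AA_def using p npos by simp
  qed
  moreover have "inj_on ?f ({..<c} \<times> {..<n} \<times> {..<4*m})"
  proof (rule inj_onI, clarsimp)
    fix t i d d' assume "i < n" "d < 4*m" "d' < 4*m" "(i + d) mod n = (i + d') mod n"
    then show "d = d'" using L_row[of i d] L_row[of i d'] n4 by (metis order_less_le_trans)
  qed
  ultimately show ?thesis by (simp add: card_image card_cartesian_product)
qed

lemma FF_surj: "FF ` Pos = UNIV"
proof (rule set_eqI, rule iffI)
  fix g :: 'a
  obtain t i j where "t < c" "i < n" "j < n" "AA t i j = Some g" using exist_pos by blast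
  then show "g \<in> FF ` Pos" unfolding Pos_def FF_def by (intro image_eqI[of _ _ "(t,i,j)"]) auto
qed simp

lemma FF_inj: "inj_on FF Pos"
proof -
  have fin: "finite Pos" unfolding Pos_def by (rule finite_subset[of _ "{..<c} \<times> {..<n} \<times> {..<n}"]) auto
  have "card (FF ` Pos) = card Pos" using FF_surj cardU card_Pos by (simp add: mult_ac)
  then show ?thesis using inj_on_iff_eq_card[OF fin, of FF] by blast
qed

lemma magic: "zero_sum_magic_set n (4*m) c AA"
  unfolding zero_sum_magic_set_def
proof (intro conjI allI impI)
  fix g :: 'a
  obtain t i j where p: "t < c" "i < n" "j < n" "AA t i j = Some g" using exist_pos by blast
  show "\<exists>!p. case p of (t, i, j) \<Rightarrow> t < c \<and> i < n \<and> j < n \<and> AA t i j = Some g"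
  proof (rule ex1I[of _ "(t,i,j)"])
    show "case (t,i,j) of (t, i, j) \<Rightarrow> t < c \<and> i < n \<and> j < n \<and> AA t i j = Some g" using p by simp
  next
    fix q assume q: "case q of (t, i, j) \<Rightarrow> t < c \<and> i < n \<and> j < n \<and> AA t i j = Some g"
    obtain t' i' j' where qq: "q = (t',i',j')" by (cases q) auto
    have "q \<in> Pos" "(t,i,j) \<in> Pos" using q p unfolding qq Pos_def by auto
    moreover have "FF q = FF (t,i,j)" using q p unfolding qq FF_def by simp
    ultimately show "q = (t,i,j)" using FF_inj by (meson inj_onD)
  qed
next
  fix t i assume "t < c" "i < n" show "card {j. j < n \<and> AA t i j \<noteq> None} = 4*m" by (rule row_count[OF \<open>i < n\<close>])
next
  fix t j assume "t < c" "j < n" show "card {i. i < n \<and> AA t i j \<noteq> None} = 4*m" by (rule col_count[OF \<open>j < n\<close>])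
next
  fix t i assume "t < c" "i < n" show "(\<Sum>j<n. entry (AA t i j)) = 0" by (rule row_sum[OF \<open>i < n\<close>])
next
  fix t j assume "t < c" "j < n" show "(\<Sum>i<n. entry (AA t i j)) = 0" by (rule col_sum[OF \<open>j < n\<close>])
qed

lemma diagset: "diagonal_set n (4*m) c AA"
  unfolding diagonal_set_def using diag by blast

end



lemma exists_cov:
  assumes G: "in_class_G TYPE('a::{ab_group_add,finite})" and d4: "4 dvd card (UNIV::'a set)"
  shows "\<exists>D P X. cov D P X (UNIV::'a set)"
proof -
  have "\<not> odd (card (UNIV::'a set))" using d4 by (metis dvd_trans even_numeral)
  then have "card {x::'a. x \<noteq> 0 \<and> x + x = 0} > 1" using G unfolding in_class_G_def by blast
  then have "\<not> (\<forall>a1\<in>{x::'a. x \<noteq> 0 \<and> x + x = 0}. \<forall>a2\<in>{x::'a. x \<noteq> 0 \<and> x + x = 0}. a1 = a2)"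
    using card_le_Suc0_iff_eq[of "{x::'a. x \<noteq> 0 \<and> x + x = 0}"] by simp
  then obtain e1 e2 :: 'a where e: "e1 \<noteq> 0" "e1 + e1 = 0" "e2 \<noteq> 0" "e2 + e2 = 0" "e1 \<noteq> e2" by blast
  show ?thesis
  proof (cases "\<exists>t D::'a. t + t = 0 \<and> D + D = 0 \<and> D \<noteq> 0 \<and> t \<noteq> 0 \<and> t \<noteq> D \<and> (\<forall>g. g + g \<noteq> t) \<and> (\<forall>g. g + g \<noteq> t + D)")
    case True
    then obtain t D :: 'a where "t + t = 0" "D + D = 0" "D \<noteq> 0" "t \<noteq> 0" "t \<noteq> D" "\<forall>g. g + g \<noteq> t" "\<forall>g. g + g \<noteq> t + D"
      by blast
    then interpret caseA t D by unfold_locales auto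
    show ?thesis using covA by blast
  next
    case False
    have dbl: "\<exists>g. g + g = t" if t: "t \<noteq> 0" "t + t = 0" for t :: 'a
    proof (rule ccontr)
      assume nt: "\<not> (\<exists>g. g + g = t)"
      obtain D :: 'a where D: "D \<noteq> 0" "D + D = 0" "D \<noteq> t"
        using e by (cases "e1 = t") auto
      have "\<exists>g. g + g = t + D" using False t D nt by blast
      then obtain g1 where g1: "g1 + g1 = t + D" by blast
      have D'1: "(t + D) + (t + D) = 0"
      proof -
        have "(t + D) + (t + D) = (t + t) + (D + D)" by (simp add: algebra_simps)
        then show ?thesis using t D by simp
      qed
      have D'2: "t + D \<noteq> 0"
      proof
        assume "t + D = 0"
        then have "D = - t" by (simp add: eq_neg_iff_add_eq_0 add.commute)
        also have "- t = t" using t by (metis add_eq_0_iff2)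
        finally show False using D by simp
      qed
      have D'3: "t \<noteq> t + D" using D by simp
      have D'4: "t + (t + D) = D" using t by (simp add: add.assoc[symmetric])
      have "\<exists>g. g + g = D"
      proof (rule ccontr)
        assume "\<not> (\<exists>g. g + g = D)"
        then have "\<forall>g. g + g \<noteq> t + (t + D)" unfolding D'4 by blast
        then show False using False t D'1 D'2 D'3 nt by blast
      qed
      then obtain g2 where g2: "g2 + g2 = D" by blast
      have "(g1 - g2) + (g1 - g2) = (g1 + g1) - (g2 + g2)" by (simp add: algebra_simps)
      also have "\<dots> = t" using g1 g2 by simp
      finally show False using nt by blast
    qed
    obtain f1 where f1: "f1 + f1 = e1" using dbl e by blast
    obtain f2 where f2: "f2 + f2 = e2" using dbl e by blast
    have a1: "f1 + f1 + f1 + f1 = 0"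
    proof -
      have "f1 + f1 + f1 + f1 = (f1 + f1) + (f1 + f1)" by (simp add: add.assoc)
      then show ?thesis using f1 e(2) by simp
    qed
    have a2: "f2 + f2 + f2 + f2 = 0"
    proof -
      have "f2 + f2 + f2 + f2 = (f2 + f2) + (f2 + f2)" by (simp add: add.assoc)
      then show ?thesis using f2 e(4) by simp
    qed
    interpret caseB f1 f2 using a1 a2 f1 f2 e by unfold_locales auto
    show ?thesis using covB by blast
  qed
qed

theorem mainTheorem9:
  fixes n k c :: nat
  assumes "n \<ge> k" and "k \<ge> 4" and "k mod 4 = 0" and "c \<ge> 1"
    and "in_class_G TYPE('a::{ab_group_add,finite})"
    and "card (UNIV :: 'a set) = n * k * c"
  shows "\<exists>A :: nat \<Rightarrow> nat \<Rightarrow> nat \<Rightarrow> 'a option.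
           zero_sum_magic_set n k c A \<and> diagonal_set n k c A"
proof -
  define m where "m = k div 4"
  have km: "k = 4 * m" unfolding m_def using assms(3) by presburger
  have d4: "4 dvd card (UNIV :: 'a set)" using assms(6) km by simp
  obtain D P :: 'a and X where X: "cov D P X UNIV" using exists_cov[OF assms(5) d4] by blast
  have finX: "finite X" and c1: "4 * card X \<le> card (UNIV::'a set)"
    and cv: "\<And>g. \<exists>x\<in>X. \<exists>\<mu><4. g = Qh D P 0 \<mu> x" using X unfolding cov_def by auto
  have "(UNIV::'a set) = (\<lambda>(x,\<mu>). Qh D P 0 \<mu> x) ` (X \<times> {..<4})"
  proof (rule set_eqI)
    fix g :: 'a
    obtain x \<mu> where "x \<in> X" "\<mu> < 4" "g = Qh D P 0 \<mu> x" using cv by blast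
    then show "g \<in> UNIV \<longleftrightarrow> g \<in> (\<lambda>(x,\<mu>). Qh D P 0 \<mu> x) ` (X \<times> {..<4})"
      by (auto intro!: image_eqI[of _ _ "(x,\<mu>)"])
  qed
  then have "card (UNIV::'a set) \<le> card (X \<times> {..<4::nat})" by (metis card_image_le finX finite_SigmaI finite_lessThan)
  then have c2: "card (UNIV::'a set) \<le> 4 * card X" by (simp add: card_cartesian_product)
  have cX: "card X = c * m * n" using c1 c2 assms(6) km by (simp add: mult_ac)
  obtain b where b: "bij_betw b {0..<card X} X" using ex_bij_betw_nat_finite[OF finX] by blast
  have bcov: "\<exists>w<c*m*n. \<exists>\<mu><4. g = Qh D P 0 \<mu> (b w)" for g
  proof -
    obtain x \<mu> where x: "x \<in> X" "\<mu> < 4" "g = Qh D P 0 \<mu> x" using cv by blast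
    have "x \<in> b ` {0..<card X}" using b x(1) by (simp add: bij_betw_def)
    then obtain w where "w \<in> {0..<card X}" "x = b w" by blast
    then show ?thesis using x cX by auto
  qed
  interpret arr n m c D P b
    using assms(1,2,4,6) km bcov by unfold_locales auto
  show ?thesis using magic diagset km by blast
qed

end
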